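(* For the ARQ protocol without feedback described in the context, the myopic policy $a_{s,t}=\mathbf{1}\{i_t=0,\ b_t\ge E_{\rm s}+E_{\rm d}\}$ (sample whenever the current packet has not yet been decoded correctly and the battery holds enough energy for both sampling and decoding) maximizes the throughput $\mathcal{T}(\Psi)=\lim_{T\to\infty}\frac1T\mathbb{E}[\sum_{t=1}^T\mathbf{1}_{S_t}]$ over all admissible policies.
   Context: System model. Time is slotted, $t=1,2,\dots$. The channel power gains $|h_t|^2$ are i.i.d. across slots with CDF $F_H$. A transmitter sends packets at fixed rate $R$ and power $p_{\rm tx}$; let $|h_{\rm th}|^2=(2^R-1)/p_{\rm tx}$ and $p_c=1-F_H(|h_{\rm th}|^2)$. Each packet may be transmitted at most $K>1$ times; $k_t\in\{0,\dots,K-1\}$ is the transmission index. The receiver harvests energy $E_{H,t}$ at the start of slot $t$, with $E_{H,t}$ i.i.d. taking values in a finite set of nonnegative integer multiples of an energy quantum $E$. Its battery level evolves as $b_{t+1}=\min\{b_t-E_{c,t}+E_{H,t+1},B_{\max}\}$, $b_1=E_{H,1}$, where $E_{c,t}$ is the energy consumed in slot $t$ and $B_{\max}<\infty$ is a multiple of $E$. Sampling costs $E_{\rm s}$ and decoding costs $E_{\rm d}$ (positive multiples of $E$). In slot $t$ the receiver chooses $a_{s,t}\in\{0,1\}$. If $a_{s,t}=1$ it consumes $E_{\rm s}$, and if $|h_t|^2\ge|h_{\rm th}|^2$ (probability $p_c$, independent of the past) it decodes the packet correctly, consuming an additional $E_{\rm d}$; otherwise nothing further is consumed. The reception state $i_t\in\{0,1\}$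 equals $1$ iff the current packet has already been decoded correctly; $S_t$ denotes the event that a packet is decoded correctly in slot $t$. System state: $\mathbf{s}_t=(b_t,k_t,i_t)$. ARQ without feedback: no acknowledgement is sent; the transmitter starts a new packet every $K$ slots ($k_{t+1}=(k_t+1)\bmod K$, and $i_{t+1}=0$ when $k_{t+1}=0$). Admissible actions: $a_{s,t}=1$ is allowed only if $i_t=0$ and $b_t\ge E_{\rm s}+E_{\rm d}$; otherwise $a_{s,t}=0$. Policies choose actions based on the system state (the limit defining throughput is assumed to exist). *)

theory Defs
  imports "HOL-Probability.Probability"
begin

text \<open>Energies are measured in units of the quantum E (natural numbers).
  System state s = (b, k, i): battery level b, transmission index k,
  reception state i (True iff the current packet is already decoded).
  A policy is a (stationary, deterministic) map from system states to the
  sampling action a_s (True = sample).\<close>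

type_synonym sysstate = "nat \<times> nat \<times> bool"
type_synonym policy = "sysstate \<Rightarrow> bool"

definition admissible :: "nat \<Rightarrow> nat \<Rightarrow> policy \<Rightarrow> bool" where
  "admissible Es Ed \<psi> \<longleftrightarrow>
     (\<forall>b k i. \<psi> (b, k, i) \<longrightarrow> \<not> i \<and> Es + Ed \<le> b)"

definition myopic :: "nat \<Rightarrow> nat \<Rightarrow> policy" where
  "myopic Es Ed = (\<lambda>(b, k, i). \<not> i \<and> Es + Ed \<le> b)"

text \<open>One slot: given the state s_t, the policy's action, the channel outcome
  (success with probability pc, independent of the past) and the harvest
  E_{H,t+1} (distributed as H, independent), returns the indicator of S_t and
  the next state s_{t+1}.\<close>

definition slot_step ::
  "nat \<Rightarrow> nat \<Rightarrow> nat \<Rightarrow> nat \<Rightarrow> real \<Rightarrow> nat pmf \<Rightarrow> policy \<Rightarrow> sysstate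
     \<Rightarrow> (bool \<times> sysstate) pmf" where
  "slot_step K Bmax Es Ed pc H \<psi> s =
     (case s of (b, k, i) \<Rightarrow>
       do { ch \<leftarrow> bernoulli_pmf pc;
            eh \<leftarrow> H;
            let a = \<psi> (b, k, i);
            let succ = (a \<and> ch);
            let Ec = (if a then Es + (if ch then Ed else 0) else 0);
            let b' = min (b - Ec + eh) Bmax;
            let k' = (Suc k) mod K;
            let i' = (if k' = 0 then False else (i \<or> succ));
            return_pmf (succ, (b', k', i')) })"

text \<open>Joint distribution of (number of correct decodings in slots 1..T, s_{T+1}).
  Initially b_1 = E_{H,1}, k_1 = 0, i_1 = 0.\<close>

fun run ::
  "nat \<Rightarrow> nat \<Rightarrow> nat \<Rightarrow> nat \<Rightarrow> real \<Rightarrow> nat pmf \<Rightarrow> policy \<Rightarrow> nat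
     \<Rightarrow> (nat \<times> sysstate) pmf" where
  "run K Bmax Es Ed pc H \<psi> 0 = map_pmf (\<lambda>e. (0, (e, 0, False))) H"
| "run K Bmax Es Ed pc H \<psi> (Suc T) =
     do { (n, s) \<leftarrow> run K Bmax Es Ed pc H \<psi> T;
          (succ, s') \<leftarrow> slot_step K Bmax Es Ed pc H \<psi> s;
          return_pmf (n + (if succ then 1 else 0), s') }"

definition avg_throughput ::
  "nat \<Rightarrow> nat \<Rightarrow> nat \<Rightarrow> nat \<Rightarrow> real \<Rightarrow> nat pmf \<Rightarrow> policy \<Rightarrow> nat \<Rightarrow> real" where
  "avg_throughput K Bmax Es Ed pc H \<psi> T =
     measure_pmf.expectation (run K Bmax Es Ed pc H \<psi> T) (\<lambda>(n, s). real n) / real T"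

definition throughput ::
  "nat \<Rightarrow> nat \<Rightarrow> nat \<Rightarrow> nat \<Rightarrow> real \<Rightarrow> nat pmf \<Rightarrow> policy \<Rightarrow> real" where
  "throughput K Bmax Es Ed pc H \<psi> = lim (avg_throughput K Bmax Es Ed pc H \<psi>)"

end

theory Submission imports Defs begin

lemma int_bind:
  fixes f :: "'b \<Rightarrow> real"
  assumes fin: "finite (set_pmf M)" and finN: "\<And>x. x \<in> set_pmf M \<Longrightarrow> finite (set_pmf (N x))"
    and nn: "\<And>y. 0 \<le> f y"
  shows "measure_pmf.expectation (bind_pmf M N) f = measure_pmf.expectation M (\<lambda>x. measure_pmf.expectation (N x) f)"
proof -
  have finB: "finite (set_pmf (bind_pmf M N))" using fin finN by simp
  have "ennreal (measure_pmf.expectation (bind_pmf M N) f) = (\<integral>\<^sup>+y. ennreal (f y) \<partial>(bind_pmf M N))"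
    by (rule nn_integral_eq_integral[symmetric]) (auto intro: integrable_measure_pmf_finite[OF finB] simp: nn)
  also have "\<dots> = (\<integral>\<^sup>+x. \<integral>\<^sup>+y. ennreal (f y) \<partial>N x \<partial>M)" by simp
  also have "\<dots> = (\<integral>\<^sup>+x. ennreal (measure_pmf.expectation (N x) f) \<partial>M)"
  proof (rule nn_integral_cong_AE, rule AE_pmfI)
    fix x assume "x \<in> set_pmf M"
    then show "(\<integral>\<^sup>+y. ennreal (f y) \<partial>N x) = ennreal (measure_pmf.expectation (N x) f)"
      by (intro nn_integral_eq_integral) (auto intro: integrable_measure_pmf_finite finN simp: nn)
  qed
  also have "\<dots> = ennreal (measure_pmf.expectation M (\<lambda>x. measure_pmf.expectation (N x) f))"
    by (intro nn_integral_eq_integral) (auto intro!: integrable_measure_pmf_finite fin integral_nonneg_AE simp: nn)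
  finally show ?thesis
    by (subst (asm) ennreal_inj) (auto intro!: integral_nonneg_AE simp: nn)
qed

lemma fin_slot:
  assumes "finite (set_pmf H)"
  shows "finite (set_pmf (slot_step K Bm Es Ed pc H \<psi> s))"
  using assms by (auto simp: slot_step_def Let_def split: prod.splits)

lemma fin_run:
  assumes "finite (set_pmf H)"
  shows "finite (set_pmf (run K Bm Es Ed pc H \<psi> T))"
  by (induction T) (use assms fin_slot[OF assms] in \<open>auto split: prod.splits\<close>)

lemma slot_formula:
  fixes f :: "sysstate \<Rightarrow> real"
  assumes pc0: "0 \<le> pc" and pc1: "pc \<le> 1" and finH: "finite (set_pmf H)" and nn: "\<And>s. 0 \<le> f s"
  shows "measure_pmf.expectation (slot_step K Bm Es Ed pc H \<psi> (b,k,i)) (\<lambda>(r,s'). (if r then 1 else 0) + f s')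
   = pc * ((if \<psi> (b,k,i) then 1 else 0) + measure_pmf.expectation H (\<lambda>e. f (min (b - (if \<psi> (b,k,i) then Es+Ed else 0) + e) Bm, Suc k mod K, if Suc k mod K = 0 then False else (i \<or> \<psi> (b,k,i)))))
     + (1 - pc) * measure_pmf.expectation H (\<lambda>e. f (min (b - (if \<psi> (b,k,i) then Es else 0) + e) Bm, Suc k mod K, if Suc k mod K = 0 then False else i))"
proof -
  have eq: "slot_step K Bm Es Ed pc H \<psi> (b,k,i) = bind_pmf (bernoulli_pmf pc) (\<lambda>ch. map_pmf (\<lambda>eh.
        (\<psi> (b,k,i) \<and> ch, (min (b - (if \<psi> (b,k,i) then Es + (if ch then Ed else 0) else 0) + eh) Bm, Suc k mod K,
          if Suc k mod K = 0 then False else (i \<or> (\<psi> (b,k,i) \<and> ch))))) H)"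
    by (simp add: slot_step_def Let_def map_pmf_def)
  show ?thesis
    apply (subst eq)
    apply (subst int_bind)
    using finH nn pc0 pc1 apply (auto simp: integrable_measure_pmf_finite)[3]
    using pc0 pc1 apply (simp add: integral_add integrable_measure_pmf_finite[OF finH])
    done
qed

definition Bop :: "nat \<Rightarrow> nat \<Rightarrow> nat \<Rightarrow> nat \<Rightarrow> real \<Rightarrow> nat pmf \<Rightarrow> policy \<Rightarrow> (sysstate \<Rightarrow> real) \<Rightarrow> sysstate \<Rightarrow> real" where
  "Bop K Bm Es Ed pc H \<psi> f s = measure_pmf.expectation (slot_step K Bm Es Ed pc H \<psi> s) (\<lambda>(r,s'). (if r then 1 else 0) + f s')"

lemma Bop_nn: assumes "\<And>s. 0 \<le> f s" shows "0 \<le> Bop K Bm Es Ed pc H \<psi> f s"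
  unfolding Bop_def by (rule integral_nonneg_AE) (auto simp: assms add_nonneg_nonneg split: prod.splits)

lemma Bop_pow_nn: assumes "\<And>s. 0 \<le> f s" shows "0 \<le> (Bop K Bm Es Ed pc H \<psi> ^^ T) f s"
  using assms by (induction T arbitrary: s) (auto intro: Bop_nn)

lemma rif: "real (if b then 1 else 0) = (if b then 1 else 0)" by simp

lemma run_rel:
  assumes finH: "finite (set_pmf H)"
  shows "\<And>f. (\<And>s. 0 \<le> f s) \<Longrightarrow> measure_pmf.expectation (run K Bm Es Ed pc H \<psi> T) (\<lambda>(n,s). real n + f s)
     = measure_pmf.expectation H (\<lambda>e. (Bop K Bm Es Ed pc H \<psi> ^^ T) f (e,0,False))"
proof (induction T)
  case 0
  then show ?case by simp
next
  case (Suc T f)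
  have inner: "measure_pmf.expectation (bind_pmf (slot_step K Bm Es Ed pc H \<psi> s) (\<lambda>(succ, s'). return_pmf (n + (if succ then 1 else 0), s'))) (\<lambda>(n,s). real n + f s)
     = real n + Bop K Bm Es Ed pc H \<psi> f s" for n s
  proof -
    have "bind_pmf (slot_step K Bm Es Ed pc H \<psi> s) (\<lambda>(succ, s'). return_pmf (n + (if succ then 1 else 0), s'))
        = map_pmf (\<lambda>(succ, s'). (n + (if succ then 1 else 0), s')) (slot_step K Bm Es Ed pc H \<psi> s)"
      by (simp add: map_pmf_def case_prod_unfold)
    then have "measure_pmf.expectation (bind_pmf (slot_step K Bm Es Ed pc H \<psi> s) (\<lambda>(succ, s'). return_pmf (n + (if succ then 1 else 0), s'))) (\<lambda>(n,s). real n + f s)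
       = measure_pmf.expectation (slot_step K Bm Es Ed pc H \<psi> s) (\<lambda>x. real n + (\<lambda>(r,s'). (if r then 1 else 0) + f s') x)"
      by (simp add: case_prod_unfold algebra_simps rif)
    also have "\<dots> = real n + Bop K Bm Es Ed pc H \<psi> f s"
      unfolding Bop_def
      by (simp add: integral_add integrable_measure_pmf_finite[OF fin_slot[OF finH]])
    finally show ?thesis .
  qed
  have "measure_pmf.expectation (run K Bm Es Ed pc H \<psi> (Suc T)) (\<lambda>(n,s). real n + f s)
     = measure_pmf.expectation (run K Bm Es Ed pc H \<psi> T) (\<lambda>x. real (fst x) + Bop K Bm Es Ed pc H \<psi> f (snd x))"
    apply simp
    apply (subst int_bind)
       prefer 4
       apply (rule Bochner_Integration.integral_cong[OF refl])
       apply (auto simp: inner split: prod.splits)[1]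
    using finH Suc.prems by (auto intro: fin_run fin_slot split: prod.splits)
  also have "\<dots> = measure_pmf.expectation H (\<lambda>e. (Bop K Bm Es Ed pc H \<psi> ^^ T) (Bop K Bm Es Ed pc H \<psi> f) (e,0,False))"
    using Suc.IH[of "Bop K Bm Es Ed pc H \<psi> f"] Suc.prems Bop_nn by (simp add: case_prod_unfold)
  also have "\<dots> = measure_pmf.expectation H (\<lambda>e. (Bop K Bm Es Ed pc H \<psi> ^^ Suc T) f (e,0,False))"
    by (simp add: funpow_Suc_right del: funpow.simps)
  finally show ?case .
qed

definition Inv :: "nat \<Rightarrow> nat \<Rightarrow> real \<Rightarrow> (sysstate \<Rightarrow> real) \<Rightarrow> bool" where
  "Inv Es Ed pc f \<longleftrightarrow> (\<forall>s. 0 \<le> f s) \<and> (\<forall>x y k i. x \<le> y \<longrightarrow> f (x,k,i) \<le> f (y,k,i))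
     \<and> (\<forall>x k j. f (x,k,j) \<le> f (x,k,False))
     \<and> (\<forall>u v w k. u \<le> v \<and> v \<le> w \<and> w \<le> v + Es \<and> v \<le> u + Ed
           \<longrightarrow> f (w,k,False) \<le> pc * (1 + f (u,k,k \<noteq> 0)) + (1 - pc) * f (v,k,False))"

context
  fixes K Bm Es Ed :: nat and pc :: real and H :: "nat pmf"
  assumes pc0: "0 \<le> pc" and pc1: "pc \<le> 1" and finH: "finite (set_pmf H)"
begin

lemma Emono: "(\<And>e. g e \<le> h e) \<Longrightarrow> measure_pmf.expectation H g \<le> measure_pmf.expectation H (h :: nat \<Rightarrow> real)"
  by (rule integral_mono) (auto intro: integrable_measure_pmf_finite[OF finH])

lemma Elin: "measure_pmf.expectation H (\<lambda>e. pc * (1 + g e) + (1 - pc) * h e) = pc * (1 + measure_pmf.expectation H g) + (1 - pc) * measure_pmf.expectation H (h :: nat \<Rightarrow> real)"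
  by (simp add: integral_add integrable_measure_pmf_finite[OF finH] algebra_simps)

lemma Enn: "(\<And>e. 0 \<le> g e) \<Longrightarrow> 0 \<le> measure_pmf.expectation H (g :: nat \<Rightarrow> real)"
  by (rule integral_nonneg_AE) auto

lemma myT: assumes "\<And>s. 0 \<le> f s"
  shows "Bop K Bm Es Ed pc H (myopic Es Ed) f (x,k,True) = measure_pmf.expectation H (\<lambda>e. f (min (x+e) Bm, Suc k mod K, Suc k mod K \<noteq> 0))"
  unfolding Bop_def
  by (subst slot_formula[OF pc0 pc1 finH assms]) (simp add: myopic_def algebra_simps)

lemma myF1: assumes "\<And>s. 0 \<le> f s" and "Es + Ed \<le> x"
  shows "Bop K Bm Es Ed pc H (myopic Es Ed) f (x,k,False) = pc * (1 + measure_pmf.expectation H (\<lambda>e. f (min (x - (Es+Ed) + e) Bm, Suc k mod K, Suc k mod K \<noteq> 0)))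
     + (1 - pc) * measure_pmf.expectation H (\<lambda>e. f (min (x - Es + e) Bm, Suc k mod K, False))"
  unfolding Bop_def
  by (subst slot_formula[OF pc0 pc1 finH assms(1)]) (simp add: myopic_def assms(2))

lemma myF2: assumes "\<And>s. 0 \<le> f s" and "\<not> Es + Ed \<le> x"
  shows "Bop K Bm Es Ed pc H (myopic Es Ed) f (x,k,False) = measure_pmf.expectation H (\<lambda>e. f (min (x + e) Bm, Suc k mod K, False))"
  unfolding Bop_def
  by (subst slot_formula[OF pc0 pc1 finH assms(1)]) (simp add: myopic_def assms(2) left_diff_distrib)

lemma Inv_step:
  assumes inv: "Inv Es Ed pc f"
  shows "Inv Es Ed pc (Bop K Bm Es Ed pc H (myopic Es Ed) f)"
proof -
  have nn: "\<And>s. 0 \<le> f s" and mono: "\<And>x y k i. x \<le> y \<Longrightarrow> f (x,k,i) \<le> f (y,k,i)"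
    and I: "\<And>x k j. f (x,k,j) \<le> f (x,k,False)"
    and G: "\<And>u v w k. u \<le> v \<Longrightarrow> v \<le> w \<Longrightarrow> w \<le> v + Es \<Longrightarrow> v \<le> u + Ed \<Longrightarrow>
              f (w,k,False) \<le> pc * (1 + f (u,k,k \<noteq> 0)) + (1 - pc) * f (v,k,False)"
    using inv unfolding Inv_def by blast+
  have Gm: "f (min w Bm,k,False) \<le> pc * (1 + f (min u Bm,k,k \<noteq> 0)) + (1 - pc) * f (min v Bm,k,False)"
    if "u \<le> v" "v \<le> w" "w \<le> v + Es" "v \<le> u + Ed" for u v w k
    by (rule G) (use that in \<open>auto simp: min_def\<close>)
  have monom: "f (min x Bm,k,i) \<le> f (min y Bm,k,i)" if "x \<le> y" for x y k i
    by (rule mono) (use that in \<open>auto simp: min_def\<close>)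
  define g where "g = Bop K Bm Es Ed pc H (myopic Es Ed) f"
  note T = myT[of f, OF nn, folded g_def]
  note F1 = myF1[of f, OF nn, folded g_def]
  note F2 = myF2[of f, OF nn, folded g_def]
  have A: "measure_pmf.expectation H (\<lambda>e. f (min (u+e) Bm, Suc k mod K, Suc k mod K \<noteq> 0)) \<le> g (u,k,i)" for u k i
  proof (cases i)
    case True then show ?thesis using T by simp
  next
    case False
    show ?thesis
    proof (cases "Es + Ed \<le> u")
      case True
      have "measure_pmf.expectation H (\<lambda>e. f (min (u+e) Bm, Suc k mod K, Suc k mod K \<noteq> 0))
          \<le> measure_pmf.expectation H (\<lambda>e. pc * (1 + f (min (u - (Es+Ed) + e) Bm, Suc k mod K, Suc k mod K \<noteq> 0)) + (1 - pc) * f (min (u - Es + e) Bm, Suc k mod K, False))"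
        apply (rule Emono)
        apply (rule order.trans[OF I])
        apply (rule Gm)
        using True by auto
      also have "\<dots> = g (u,k,i)" using F1[OF True] False by (simp add: Elin)
      finally show ?thesis .
    next
      case c: False
      show ?thesis using F2[OF c] False by (simp add: Emono I)
    qed
  qed
  show ?thesis
    unfolding Inv_def g_def[symmetric]
  proof (intro conjI allI impI)
    show "0 \<le> g s" for s unfolding g_def by (rule Bop_nn[OF nn])
  next
    fix x y k i assume xy: "(x::nat) \<le> y"
    show "g (x,k,i) \<le> g (y,k,i)"
    proof (cases i)
      case True then show ?thesis using xy by (simp add: T Emono monom)
    next
      case False
      show ?thesis
      proof (cases "Es + Ed \<le> x")
        case True
        then have "Es + Ed \<le> y" using xy by simp
        have e1: "measure_pmf.expectation H (\<lambda>e. f (min (x - (Es+Ed) + e) Bm, Suc k mod K, Suc k mod K \<noteq> 0))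
            \<le> measure_pmf.expectation H (\<lambda>e. f (min (y - (Es+Ed) + e) Bm, Suc k mod K, Suc k mod K \<noteq> 0))"
          by (rule Emono, rule monom) (use xy in auto)
        have e2: "measure_pmf.expectation H (\<lambda>e. f (min (x - Es + e) Bm, Suc k mod K, False))
            \<le> measure_pmf.expectation H (\<lambda>e. f (min (y - Es + e) Bm, Suc k mod K, False))"
          by (rule Emono, rule monom) (use xy in auto)
        have ii: "i = False" using False by simp
        show ?thesis unfolding ii F1[OF True] F1[OF \<open>Es + Ed \<le> y\<close>] using e1 e2 pc0 pc1
          by (intro add_mono mult_left_mono) auto
      next
        case c: False
        show ?thesis
        proof (cases "Es + Ed \<le> y")
          case True
          have "g (x,k,i) = measure_pmf.expectation H (\<lambda>e. f (min (x + e) Bm, Suc k mod K, False))" using F2[OF c] False by simp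
          also have "\<dots> \<le> measure_pmf.expectation H (\<lambda>e. f (min (y + e) Bm, Suc k mod K, False))"
            using xy by (simp add: Emono monom)
          also have "\<dots> \<le> measure_pmf.expectation H (\<lambda>e. pc * (1 + f (min (y - (Es+Ed) + e) Bm, Suc k mod K, Suc k mod K \<noteq> 0)) + (1 - pc) * f (min (y - Es + e) Bm, Suc k mod K, False))"
            apply (rule Emono) apply (rule Gm) using True by auto
          also have "\<dots> = g (y,k,i)" using F1[OF True] False by (simp add: Elin)
          finally show ?thesis .
        next
          case False
          then show ?thesis using c \<open>\<not> i\<close> xy by (simp add: F2 Emono monom)
        qed
      qed
    qed
  next
    fix x k j
    show "g (x,k,j) \<le> g (x,k,False)"
      by (cases j) (use A[of x k False] T in auto)
  next
    fix u v w k
    assume h: "u \<le> v \<and> v \<le> w \<and> w \<le> v + Es \<and> v \<le> u + Ed"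
    let ?k = "Suc k mod K"
    let ?j = "Suc k mod K \<noteq> 0"
    let ?E = "measure_pmf.expectation H"
    show "g (w,k,False) \<le> pc * (1 + g (u,k,k \<noteq> 0)) + (1 - pc) * g (v,k,False)"
    proof (cases "Es + Ed \<le> w")
      case True
      have P1: "?E (\<lambda>e. f (min (w - (Es+Ed) + e) Bm, ?k, ?j)) \<le> g (u,k,k \<noteq> 0)"
        apply (rule order.trans[OF _ A])
        apply (rule Emono, rule monom) using h by auto
      have P2: "?E (\<lambda>e. f (min (w - Es + e) Bm, ?k, False)) \<le> g (v,k,False)"
      proof (cases "Es + Ed \<le> v")
        case True
        have "?E (\<lambda>e. f (min (w - Es + e) Bm, ?k, False))
          \<le> ?E (\<lambda>e. pc * (1 + f (min (v - (Es+Ed) + e) Bm, ?k, ?j)) + (1 - pc) * f (min (v - Es + e) Bm, ?k, False))"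
          apply (rule Emono) apply (rule Gm) using True h by auto
        also have "\<dots> = g (v,k,False)" using F1[OF True] by (simp add: Elin)
        finally show ?thesis .
      next
        case False
        have "?E (\<lambda>e. f (min (w - Es + e) Bm, ?k, False)) \<le> ?E (\<lambda>e. f (min (v + e) Bm, ?k, False))"
          by (rule Emono, rule monom) (use h in auto)
        then show ?thesis using F2[OF False] by simp
      qed
      have "g (w,k,False) = pc * (1 + ?E (\<lambda>e. f (min (w - (Es+Ed) + e) Bm, ?k, ?j))) + (1 - pc) * ?E (\<lambda>e. f (min (w - Es + e) Bm, ?k, False))"
        using F1[OF True] by simp
      also have "\<dots> \<le> pc * (1 + g (u,k,k \<noteq> 0)) + (1 - pc) * g (v,k,False)"
        using P1 P2 pc0 pc1 by (intro add_mono mult_left_mono) auto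
      finally show ?thesis .
    next
      case False
      then have nv: "\<not> Es + Ed \<le> v" using h by simp
      have "g (w,k,False) = ?E (\<lambda>e. f (min (w + e) Bm, ?k, False))" using F2[OF False] by simp
      also have "\<dots> \<le> ?E (\<lambda>e. pc * (1 + f (min (u + e) Bm, ?k, ?j)) + (1 - pc) * f (min (v + e) Bm, ?k, False))"
        apply (rule Emono) apply (rule Gm) using h by auto
      also have "\<dots> = pc * (1 + ?E (\<lambda>e. f (min (u + e) Bm, ?k, ?j))) + (1 - pc) * ?E (\<lambda>e. f (min (v + e) Bm, ?k, False))"
        by (simp add: Elin)
      also have "\<dots> \<le> pc * (1 + g (u,k,k \<noteq> 0)) + (1 - pc) * g (v,k,False)"
        using A[of u k "k \<noteq> 0"] F2[OF nv] pc0 pc1 by (intro add_mono mult_left_mono) auto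
      finally show ?thesis .
    qed
  qed
qed

lemma Inv0: "Inv Es Ed pc (\<lambda>_. 0)"
  unfolding Inv_def using pc0 pc1 by auto

lemma InvW: "Inv Es Ed pc ((Bop K Bm Es Ed pc H (myopic Es Ed) ^^ T) (\<lambda>_. 0))"
  by (induction T) (auto simp: Inv0 Inv_step)

lemma Bop_cong: "\<psi> s = \<phi> s \<Longrightarrow> Bop K Bm Es Ed pc H \<psi> f s = Bop K Bm Es Ed pc H \<phi> f s"
  unfolding Bop_def by (cases s) (simp add: slot_step_def)

lemma Bop_mono:
  assumes nn: "\<And>s. 0 \<le> f s" and le: "\<And>s. f s \<le> g s"
  shows "Bop K Bm Es Ed pc H \<psi> f s \<le> Bop K Bm Es Ed pc H \<psi> g s"
proof -
  have nng: "\<And>s. 0 \<le> g s" using nn le order.trans by blast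
  obtain b k i where s: "s = (b,k,i)" by (cases s) auto
  show ?thesis unfolding Bop_def s
    apply (subst slot_formula[OF pc0 pc1 finH nn])
    apply (subst slot_formula[OF pc0 pc1 finH nng])
    using pc0 pc1 by (intro add_mono mult_left_mono Emono le) auto
qed

lemma greedy:
  assumes adm: "admissible Es Ed \<psi>" and inv: "Inv Es Ed pc f"
  shows "Bop K Bm Es Ed pc H \<psi> f s \<le> Bop K Bm Es Ed pc H (myopic Es Ed) f s"
proof (cases "\<psi> s = myopic Es Ed s")
  case True then show ?thesis using Bop_cong[of \<psi> s "myopic Es Ed" f, OF True] by simp
next
  case False
  obtain b k i where s: "s = (b,k,i)" by (cases s)
  have nn: "\<And>s. 0 \<le> f s"
    and G: "\<And>u v w k. u \<le> v \<Longrightarrow> v \<le> w \<Longrightarrow> w \<le> v + Es \<Longrightarrow> v \<le> u + Ed \<Longrightarrow>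
              f (w,k,False) \<le> pc * (1 + f (u,k,k \<noteq> 0)) + (1 - pc) * f (v,k,False)"
    using inv unfolding Inv_def by blast+
  have Gm: "f (min w Bm,k,False) \<le> pc * (1 + f (min u Bm,k,k \<noteq> 0)) + (1 - pc) * f (min v Bm,k,False)"
    if "u \<le> v" "v \<le> w" "w \<le> v + Es" "v \<le> u + Ed" for u v w k
    by (rule G) (use that in \<open>auto simp: min_def\<close>)
  have m: "myopic Es Ed (b,k,i) = (\<not> i \<and> Es + Ed \<le> b)" by (simp add: myopic_def)
  have a: "\<psi> (b,k,i) \<longrightarrow> \<not> i \<and> Es + Ed \<le> b" using adm unfolding admissible_def by blast
  have ps: "\<not> \<psi> (b,k,i)" and ii: "i = False" and bS: "Es + Ed \<le> b"
    using False[unfolded s m] a by blast+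
  have "Bop K Bm Es Ed pc H \<psi> f s = measure_pmf.expectation H (\<lambda>e. f (min (b + e) Bm, Suc k mod K, False))"
    unfolding Bop_def s ii
    by (subst slot_formula[OF pc0 pc1 finH nn], simp only: ps[unfolded ii] if_False simp_thms diff_zero, simp add: left_diff_distrib)
  also have "\<dots> \<le> measure_pmf.expectation H (\<lambda>e. pc * (1 + f (min (b - (Es+Ed) + e) Bm, Suc k mod K, Suc k mod K \<noteq> 0)) + (1 - pc) * f (min (b - Es + e) Bm, Suc k mod K, False))"
    apply (rule Emono) apply (rule Gm) using bS by auto
  also have "\<dots> = Bop K Bm Es Ed pc H (myopic Es Ed) f s"
    unfolding s ii using myF1[of f b k, OF nn bS] by (simp add: Elin)
  finally show ?thesis .
qed

lemma opt:
  assumes adm: "admissible Es Ed \<psi>"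
  shows "(Bop K Bm Es Ed pc H \<psi> ^^ T) (\<lambda>_. 0) s \<le> (Bop K Bm Es Ed pc H (myopic Es Ed) ^^ T) (\<lambda>_. 0) s"
proof (induction T arbitrary: s)
  case 0 then show ?case by simp
next
  case (Suc T)
  have "(Bop K Bm Es Ed pc H \<psi> ^^ Suc T) (\<lambda>_. 0) s = Bop K Bm Es Ed pc H \<psi> ((Bop K Bm Es Ed pc H \<psi> ^^ T) (\<lambda>_. 0)) s"
    by simp
  also have "\<dots> \<le> Bop K Bm Es Ed pc H \<psi> ((Bop K Bm Es Ed pc H (myopic Es Ed) ^^ T) (\<lambda>_. 0)) s"
    by (rule Bop_mono) (auto intro: Bop_pow_nn Suc.IH)
  also have "\<dots> \<le> Bop K Bm Es Ed pc H (myopic Es Ed) ((Bop K Bm Es Ed pc H (myopic Es Ed) ^^ T) (\<lambda>_. 0)) s"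
    by (rule greedy[OF adm InvW])
  finally show ?case by simp
qed

lemma avg_le:
  assumes adm: "admissible Es Ed \<psi>"
  shows "avg_throughput K Bm Es Ed pc H \<psi> T \<le> avg_throughput K Bm Es Ed pc H (myopic Es Ed) T"
proof -
  have eq: "avg_throughput K Bm Es Ed pc H \<phi> T = measure_pmf.expectation H (\<lambda>e. (Bop K Bm Es Ed pc H \<phi> ^^ T) (\<lambda>_. 0) (e,0,False)) / real T" for \<phi>
    using run_rel[OF finH, of "\<lambda>_. 0" K Bm Es Ed pc \<phi> T] unfolding avg_throughput_def by simp
  show ?thesis unfolding eq
    by (intro divide_right_mono Emono opt adm) auto
qed

end

theorem proposition1:
  fixes K Bmax Es Ed :: nat and pc :: real and H :: "nat pmf" and \<psi> :: policy
  assumes "K > 1"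
    and "Es > 0" and "Ed > 0"
    and "0 \<le> pc" and "pc \<le> 1"
    and "finite (set_pmf H)"
    and "admissible Es Ed \<psi>"
    and "convergent (avg_throughput K Bmax Es Ed pc H \<psi>)"
    and "convergent (avg_throughput K Bmax Es Ed pc H (myopic Es Ed))"
  shows "throughput K Bmax Es Ed pc H \<psi> \<le> throughput K Bmax Es Ed pc H (myopic Es Ed)"
  unfolding throughput_def
  apply (rule LIMSEQ_le[OF assms(8)[unfolded convergent_LIMSEQ_iff] assms(9)[unfolded convergent_LIMSEQ_iff]])
  using avg_le[OF assms(4,5,6,7)] by blast

end
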